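(* Let $\alpha>0$. Suppose sequences $\{\bm{P}^k\}_{k\ge0}\subseteq\mathcal{B}(n,K)$ and $\{\bm{Y}^k\}_{k\ge0}\subseteq\mathbb{R}^{n\times K}$ satisfy $\bm{P}^{k+1}\in\operatorname{sign}(\bm{P}^k+\bm{Y}^k/\alpha)$ for all $k\ge0$, $\bm{P}^k\to\bm{P}^*$ and $\bm{Y}^k\to\bm{Y}^*$. Then $\bm{P}^*\in\operatorname{sign}(\bm{P}^*+\bm{Y}^*/\alpha)$. Moreover, for any $\bm{Y}\in\mathbb{R}^{n\times K}$ with $\bm{P}^*\in\operatorname{sign}(\bm{Y})$, we have $\bm{P}^*\in\operatorname{sign}(\bm{P}^*+\bm{Y}/\alpha)$.
   Context: $\mathcal{B}(n,K)$ is the set of $n\times K$ matrices with entries in $\{\pm1\}$. For $a\in\mathbb{R}$, $\operatorname{sign}(a)=\{a/|a|\}$ if $a\ne0$ and $\operatorname{sign}(0)=\{-1,1\}$; for a matrix $\bm{B}$, $\operatorname{sign}(\bm{B})$ is the set of matrices $\bm{\xi}$ with $\xi_{ij}\in\operatorname{sign}(B_{ij})$ for all $i,j$. *)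

theory Defs
  imports "HOL-Analysis.Analysis"
begin

definition sign_set :: "real \<Rightarrow> real set" where
  "sign_set a = (if a = 0 then {-1, 1} else {a / \<bar>a\<bar>})"

definition sign_mat :: "real^'k^'n \<Rightarrow> (real^'k^'n) set" where
  "sign_mat B = {X. \<forall>i j. X $ i $ j \<in> sign_set (B $ i $ j)}"

definition binary_mats :: "(real^'k^'n) set" where
  "binary_mats = {X. \<forall>i j. X $ i $ j \<in> {-1, 1}}"

end

theory Submission
  imports Defs
begin

lemma sign_char:
  assumes "p = -1 \<or> p = 1"
  shows "p \<in> sign_set a \<longleftrightarrow> 0 \<le> p * a"
proof (cases "a = 0")
  case True then show ?thesis using assms by (auto simp: sign_set_def)
next
  case False
  have "p \<in> sign_set a \<longleftrightarrow> p = a / \<bar>a\<bar>" using False by (simp add: sign_set_def)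
  also have "\<dots> \<longleftrightarrow> 0 \<le> p * a"
  proof (cases "a > 0")
    case True then show ?thesis using assms by auto
  next
    case False2: False
    then have "a < 0" using False by simp
    then show ?thesis using assms by auto
  qed
  finally show ?thesis .
qed

lemma binary_entry:
  assumes "p = -1 \<or> p = (1::real)"
  shows "p * p = 1" using assms by auto

theorem lemma3:
  fixes \<alpha> :: real
    and P Y :: "nat \<Rightarrow> real^'k^'n"
    and Pstar Ystar :: "real^'k^'n"
  assumes "\<alpha> > 0"
    and "\<And>k. P k \<in> binary_mats"
    and "\<And>k. P (Suc k) \<in> sign_mat (P k + (1/\<alpha>) *\<^sub>R Y k)"
    and "P \<longlonglongrightarrow> Pstar"
    and "Y \<longlonglongrightarrow> Ystar"
  shows "Pstar \<in> sign_mat (Pstar + (1/\<alpha>) *\<^sub>R Ystar) \<and>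
         (\<forall>Y'::real^'k^'n. Pstar \<in> sign_mat Y' \<longrightarrow> Pstar \<in> sign_mat (Pstar + (1/\<alpha>) *\<^sub>R Y'))"
proof -
  have PT: "(\<lambda>k. P k $ i $ j) \<longlonglongrightarrow> Pstar $ i $ j" for i j
    by (intro tendsto_vec_nth assms(4))
  have YT: "(\<lambda>k. Y k $ i $ j) \<longlonglongrightarrow> Ystar $ i $ j" for i j
    by (intro tendsto_vec_nth assms(5))
  have bin: "P k $ i $ j = -1 \<or> P k $ i $ j = 1" for k i j
    using assms(2)[of k] by (auto simp: binary_mats_def)
  have sq: "Pstar $ i $ j * Pstar $ i $ j = 1" for i j
  proof -
    have "(\<lambda>k. P k $ i $ j * P k $ i $ j) \<longlonglongrightarrow> Pstar $ i $ j * Pstar $ i $ j"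
      by (intro tendsto_mult PT)
    moreover have "(\<lambda>k. P k $ i $ j * P k $ i $ j) = (\<lambda>k. 1)"
      using binary_entry[OF bin] by auto
    ultimately show ?thesis using LIMSEQ_unique tendsto_const by metis
  qed
  have pb: "Pstar $ i $ j = -1 \<or> Pstar $ i $ j = 1" for i j
  proof -
    have "(Pstar $ i $ j - 1) * (Pstar $ i $ j + 1) = 0" using sq[of i j] by (simp add: algebra_simps)
    then show ?thesis by auto
  qed
  have ineq: "0 \<le> P (Suc k) $ i $ j * (P k $ i $ j + (1/\<alpha>) * Y k $ i $ j)" for k i j
    using assms(3)[of k] sign_char[OF bin[of "Suc k" i j]] by (auto simp: sign_mat_def)
  have lim: "(\<lambda>k. P (Suc k) $ i $ j * (P k $ i $ j + (1/\<alpha>) * Y k $ i $ j))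
      \<longlonglongrightarrow> Pstar $ i $ j * (Pstar $ i $ j + (1/\<alpha>) * Ystar $ i $ j)" for i j
  proof -
    have "(\<lambda>k. P (Suc k) $ i $ j) \<longlonglongrightarrow> Pstar $ i $ j" using LIMSEQ_Suc[OF PT] .
    then show ?thesis by (intro tendsto_mult tendsto_add tendsto_const PT YT)
  qed
  have 1: "0 \<le> Pstar $ i $ j * (Pstar $ i $ j + (1/\<alpha>) * Ystar $ i $ j)" for i j
    by (rule LIMSEQ_le_const[OF lim]) (use ineq in auto)
  have A: "Pstar \<in> sign_mat (Pstar + (1/\<alpha>) *\<^sub>R Ystar)"
    using 1 sign_char[OF pb] by (auto simp: sign_mat_def)
  have B: "Pstar \<in> sign_mat (Pstar + (1/\<alpha>) *\<^sub>R Y')" if "Pstar \<in> sign_mat Y'" for Y'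
  proof -
    have "0 \<le> Pstar $ i $ j * (Pstar $ i $ j + (1/\<alpha>) * Y' $ i $ j)" for i j
    proof -
      have h: "0 \<le> Pstar $ i $ j * Y' $ i $ j"
        using that sign_char[OF pb] by (auto simp: sign_mat_def)
      have "Pstar $ i $ j * (Pstar $ i $ j + (1/\<alpha>) * Y' $ i $ j)
          = 1 + (1/\<alpha>) * (Pstar $ i $ j * Y' $ i $ j)"
        using sq[of i j] by (simp add: algebra_simps)
      also have "\<dots> \<ge> 0" using h assms(1) by simp
      finally show ?thesis .
    qed
    then show ?thesis using sign_char[OF pb] by (auto simp: sign_mat_def)
  qed
  show ?thesis using A B by blast
qed

end
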